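(* Let $f$ be meromorphic on $\mathbb{C}$, not identically zero, and suppose there is $\omega\in\mathbb{C}\setminus\{0\}$ such that for every $t\in\mathbb{R}$ the phase of $f$ is invariant under translation by $t\omega$, i.e. $f(z+t\omega)/|f(z+t\omega)|=f(z)/|f(z)|$ whenever both sides are defined. Then there exist $a,b\in\mathbb{C}$ with $f(z)=\mathrm{e}^{az+b}$ for all $z\in\mathbb{C}$.
   Context: The phase $f(z)/|f(z)|$ is defined at points where $f(z)\in\mathbb{C}\setminus\{0\}$. *)

theory Defs
  imports "HOL-Analysis.Analysis"
begin

text \<open>A meromorphic function on the whole complex plane, with pole set P:
  P has no accumulation point in the plane, f is holomorphic off P,
  and f tends to infinity at every point of P (the values of f on P are irrelevant).\<close>
definition meromorphic_on_C :: "(complex \<Rightarrow> complex) \<Rightarrow> complex set \<Rightarrow> bool" where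
  "meromorphic_on_C f P \<longleftrightarrow>
     (\<forall>z. \<not> z islimpt P) \<and> f holomorphic_on (- P) \<and>
     (\<forall>p\<in>P. filterlim f at_infinity (at p))"

end

theory Submission
  imports Defs
begin


lemma line_deriv:
  assumes "(f has_field_derivative D) (at q)" "q = p + of_real x * v"
  shows "((\<lambda>t. f (p + of_real t * v)) has_vector_derivative (v * D)) (at x within S)"
proof -
  have "((\<lambda>s. f (p + s * v)) has_field_derivative D * v) (at (of_real x))"
  proof -
    have "((\<lambda>s. p + s * v) has_field_derivative v) (at (of_real x))"
      by (auto intro!: derivative_eq_intros)
    from DERIV_chain'[OF this, of f D] show ?thesis using assms by simp
  qed
  from has_vector_derivative_real_field[OF this] show ?thesis by (simp add: mult.commute)
qed

lemma deriv_eq_ev: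
  fixes \<phi> \<psi> :: "real \<Rightarrow> 'a::real_normed_vector"
  assumes "(\<phi> has_vector_derivative A) (at x)" "(\<psi> has_vector_derivative B) (at x)"
    "eventually (\<lambda>t. \<phi> t = \<psi> t) (nhds x)"
  shows "A = B"
proof -
  have "\<phi> x = \<psi> x" using eventually_nhds_x_imp_x[OF assms(3)] by simp
  then have "(\<psi> has_vector_derivative A) (at x)"
    using has_vector_derivative_cong_ev[where f=\<phi> and g=\<psi> and S=UNIV] assms(1,3) by (auto elim: eventually_mono)
  then show ?thesis using assms(2) vector_derivative_unique_at by blast
qed

lemma ev_line:
  fixes p v :: complex
  assumes "open U" "p + of_real x * v \<in> U"
  shows "eventually (\<lambda>t. p + of_real t * v \<in> U) (nhds x)"
proof -
  have "isCont (\<lambda>t. p + of_real t * v) x" by (auto intro!: continuous_intros isCont_of_real)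
  then show ?thesis using assms
    by (simp add: eventually_nhds_conv_at isCont_def tendsto_def)
qed

lemma phase_real:
  fixes a b :: complex
  assumes "a \<noteq> 0" "b \<noteq> 0" "a / of_real (cmod a) = b / of_real (cmod b)"
  shows "cnj (a * cnj b) = a * cnj b"
proof -
  define r where "r = cmod a"
  have "a = of_real r * (a / of_real (cmod a))" using assms(1) by (simp add: r_def)
  then have ea: "a = of_real r * (b / of_real (cmod b))" using assms(3) by metis
  have "a * cnj b = of_real r * (b / of_real (cmod b)) * cnj b" by (subst ea) (rule refl)
  also have "\<dots> = of_real r * (b * cnj b) / of_real (cmod b)" by simp
  also have "\<dots> = of_real (r * (cmod b)^2 / cmod b)"
    by (simp only: complex_norm_square[symmetric] of_real_mult of_real_divide)
  finally show ?thesis by (metis complex_cnj_complex_of_real)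
qed

lemma prod_id:
  fixes a b c d :: complex
  assumes "a \<noteq> 0" "b \<noteq> 0" "c \<noteq> 0" "d \<noteq> 0" "cmod a = cmod b" "cmod c = cmod d"
    "a / of_real (cmod a) = c / of_real (cmod c)" "b / of_real (cmod b) = d / of_real (cmod d)"
  shows "a * d = b * c"
proof -
  have "a = of_real (cmod a) * (a / of_real (cmod a))" using assms(1) by simp
  then have ea: "a = of_real (cmod b) * (c / of_real (cmod c))" using assms(5,7) by metis
  have "d = of_real (cmod d) * (d / of_real (cmod d))" using assms(4) by simp
  then have ed: "d = of_real (cmod c) * (b / of_real (cmod b))" using assms(6,8) by metis
  have nb: "of_real (cmod b) \<noteq> (0::complex)" using assms(2) by simp
  have nc: "of_real (cmod c) \<noteq> (0::complex)" using assms(3) by simp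
  have "a * d = of_real (cmod b) * (c / of_real (cmod c)) * (of_real (cmod c) * (b / of_real (cmod b)))"
    by (subst ea, subst ed, rule refl)
  also have "\<dots> = b * c" using nb nc by (simp add: field_simps)
  finally show ?thesis .
qed
theorem mainTheorem9:
  fixes f :: "complex \<Rightarrow> complex" and P :: "complex set" and \<omega> :: complex
  assumes "meromorphic_on_C f P"
    and "\<exists>z. z \<notin> P \<and> f z \<noteq> 0"
    and "\<omega> \<noteq> 0"
    and "\<And>(t::real) z. z \<notin> P \<Longrightarrow> z + of_real t * \<omega> \<notin> P \<Longrightarrow> f z \<noteq> 0 \<Longrightarrow>
           f (z + of_real t * \<omega>) \<noteq> 0 \<Longrightarrow>
           f (z + of_real t * \<omega>) / of_real (cmod (f (z + of_real t * \<omega>))) = f z / of_real (cmod (f z))"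
  shows "\<exists>a b :: complex. \<forall>z. f z = exp (a * z + b)"
proof -
  note mer = assms(1)[unfolded meromorphic_on_C_def]
  have nlim: "\<And>z. \<not> z islimpt P" and hol: "f holomorphic_on (- P)"
    and pinf: "\<And>p. p \<in> P \<Longrightarrow> filterlim f at_infinity (at p)" using mer by auto
  have clP: "closed P" using nlim closed_limpt by blast
  have oV: "open (- P)" using clP by auto
  define U where "U = (- P) \<inter> f -` (- {0})"
  have oU: "open U" unfolding U_def
    using continuous_open_preimage[OF holomorphic_on_imp_continuous_on[OF hol] oV, of "- {0}"] by auto
  have U_iff: "\<And>z. z \<in> U \<longleftrightarrow> z \<notin> P \<and> f z \<noteq> 0" by (auto simp: U_def)
  have der: "\<And>z. z \<notin> P \<Longrightarrow> (f has_field_derivative deriv f z) (at z)"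
    using holomorphic_derivI[OF hol oV] by auto
  have ph: "\<And>t z. z \<in> U \<Longrightarrow> z + of_real t * \<omega> \<in> U \<Longrightarrow>
      f (z + of_real t * \<omega>) / of_real (cmod (f (z + of_real t * \<omega>))) = f z / of_real (cmod (f z))"
    using assms(4) U_iff by blast
  have step1: "Im (\<omega> * deriv f z * cnj (f z)) = 0" if z: "z \<in> U" for z
  proof -
    define A where "A = \<omega> * deriv f z * cnj (f z)"
    have d0: "((\<lambda>t. f (z + of_real t * \<omega>)) has_vector_derivative \<omega> * deriv f z) (at 0)"
      using line_deriv[OF der, of z z 0 \<omega> UNIV] z U_iff by auto
    have d1: "((\<lambda>t. f (z + of_real t * \<omega>) * cnj (f z)) has_vector_derivative A) (at 0)"
      unfolding A_def by (rule has_vector_derivative_mult_left[OF d0])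
    have d2: "((\<lambda>t. cnj (f (z + of_real t * \<omega>) * cnj (f z))) has_vector_derivative cnj A) (at 0)"
      using has_vector_derivative_cnj[OF d1] .
    have ev: "eventually (\<lambda>t. f (z + of_real t * \<omega>) * cnj (f z) = cnj (f (z + of_real t * \<omega>) * cnj (f z))) (nhds 0)"
      using ev_line[OF oU, of z 0 \<omega>] z
    proof (auto elim!: eventually_mono)
      fix t assume t: "z + of_real t * \<omega> \<in> U"
      show "f (z + of_real t * \<omega>) * cnj (f z) = cnj (f (z + of_real t * \<omega>)) * f z"
        using phase_real[of "f (z + of_real t * \<omega>)" "f z"] ph[OF z t] U_iff z t by auto
    qed
    have "A = cnj A" using deriv_eq_ev[OF d1 d2 ev] .
    then have "Im A = 0" by (simp add: complex_eq_iff)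
    then show ?thesis unfolding A_def .
  qed
  have local: "\<exists>e>0. \<forall>w\<in>ball z0 e. w \<in> U \<and> deriv f w * f z0 = deriv f z0 * f w" if z0: "z0 \<in> U" for z0
  proof -
    obtain r where r: "r > 0" "ball z0 r \<subseteq> U" using oU z0 open_contains_ball by blast
    have w0: "cmod \<omega> > 0" using assms(3) by simp
    define \<rho> where "\<rho> = r / (2 * cmod \<omega>)"
    have rho: "\<rho> > 0" using r w0 by (simp add: \<rho>_def)
    define Q where "Q = (\<lambda>x y::real. z0 + of_real x * \<omega> + of_real y * (\<i> * \<omega>))"
    define S where "S = ball (0::real) \<rho>"
    have S0: "0 \<in> S" using rho by (simp add: S_def)
    have oS: "open S" by (simp add: S_def)
    have Q00: "Q 0 0 = z0" by (simp add: Q_def)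
    have QU: "Q x y \<in> U" if x: "x \<in> S" and y: "y \<in> S" for x y
    proof -
      have ax: "\<bar>x\<bar> < \<rho>" "\<bar>y\<bar> < \<rho>" using x y by (auto simp: S_def)
      have "cmod (Q x y - z0) \<le> cmod (of_real x * \<omega>) + cmod (of_real y * (\<i> * \<omega>))"
        unfolding Q_def by (simp add: norm_triangle_ineq)
      also have "\<dots> = \<bar>x\<bar> * cmod \<omega> + \<bar>y\<bar> * cmod \<omega>" by (simp add: norm_mult)
      also have "\<dots> < \<rho> * cmod \<omega> + \<rho> * cmod \<omega>"
        using ax w0 by (intro add_strict_mono mult_strict_right_mono) auto
      also have "\<dots> = r" using w0 by (simp add: \<rho>_def field_simps)
      finally have "Q x y \<in> ball z0 r" by (simp add: dist_norm norm_minus_commute)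
      then show ?thesis using r by blast
    qed
    have Qa: "z0 + of_real y * (\<i> * \<omega>) + of_real x * \<omega> = Q x y" for x y
      by (simp add: Q_def algebra_simps)
    have Qb: "z0 + of_real x * \<omega> + of_real y * (\<i> * \<omega>) = Q x y" for x y
      by (simp add: Q_def)
    have modc: "cmod (f (Q x y)) = cmod (f (Q x 0))" if x: "x \<in> S" and y: "y \<in> S" for x y
    proof -
      define N where "N = (\<lambda>\<tau>. f (Q x \<tau>) * cnj (f (Q x \<tau>)))"
      have "(N has_vector_derivative 0) (at \<tau> within S)" if \<tau>: "\<tau> \<in> S" for \<tau>
      proof -
        have qu: "Q x \<tau> \<in> U" using QU x \<tau> .
        have dg: "((\<lambda>s. f (Q x s)) has_vector_derivative (\<i>*\<omega>) * deriv f (Q x \<tau>)) (at \<tau> within S)"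
          using line_deriv[OF der[of "Q x \<tau>"], of "z0 + of_real x * \<omega>" \<tau> "\<i>*\<omega>" S] qu U_iff
          unfolding Qb by auto
        have dN: "(N has_vector_derivative (f (Q x \<tau>) * cnj ((\<i>*\<omega>) * deriv f (Q x \<tau>)) + (\<i>*\<omega>) * deriv f (Q x \<tau>) * cnj (f (Q x \<tau>)))) (at \<tau> within S)"
          unfolding N_def by (rule has_vector_derivative_mult[OF dg has_vector_derivative_cnj[OF dg]])
        define B where "B = \<omega> * deriv f (Q x \<tau>) * cnj (f (Q x \<tau>))"
        have IB: "Im B = 0" using step1[OF qu] by (simp add: B_def)
        have "f (Q x \<tau>) * cnj ((\<i>*\<omega>) * deriv f (Q x \<tau>)) + (\<i>*\<omega>) * deriv f (Q x \<tau>) * cnj (f (Q x \<tau>))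
              = cnj (\<i> * B) + \<i> * B" by (simp add: B_def algebra_simps)
        also have "\<dots> = 0" using IB by (simp add: complex_eq_iff)
        finally have e: "f (Q x \<tau>) * cnj ((\<i>*\<omega>) * deriv f (Q x \<tau>)) + (\<i>*\<omega>) * deriv f (Q x \<tau>) * cnj (f (Q x \<tau>)) = 0" .
        show ?thesis using dN by (simp only: e)
      qed
      then obtain c where "\<And>\<tau>. \<tau> \<in> S \<Longrightarrow> N \<tau> = c"
        using has_vector_derivative_zero_constant[of S N] by (auto simp: S_def)
      then have "N y = N 0" using y S0 by simp
      then have "(cmod (f (Q x y)))^2 = (cmod (f (Q x 0)))^2"
        unfolding N_def by (metis complex_norm_square of_real_eq_iff)
      then show ?thesis by (simp add: power2_eq_iff_nonneg)
    qed
    have phc: "f (Q x y) / of_real (cmod (f (Q x y))) = f (Q 0 y) / of_real (cmod (f (Q 0 y)))"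
      if x: "x \<in> S" and y: "y \<in> S" for x y
      using ph[of "Q 0 y" x] QU[OF S0 y] QU[OF x y] Qa[of y 0] Qa[of y x] by simp
    have pid: "f (Q x y) * f z0 = f (Q x 0) * f (Q 0 y)" if x: "x \<in> S" and y: "y \<in> S" for x y
    proof -
      have n1: "f (Q x y) \<noteq> 0" using QU[OF x y] U_iff by blast
      have n2: "f (Q x 0) \<noteq> 0" using QU[OF x S0] U_iff by blast
      have n3: "f (Q 0 y) \<noteq> 0" using QU[OF S0 y] U_iff by blast
      have n4: "f (Q 0 0) \<noteq> 0" using QU[OF S0 S0] U_iff by blast
      show ?thesis using prod_id[OF n1 n2 n3 n4 modc[OF x y] modc[OF S0 y] phc[OF x y] phc[OF x S0]] Q00
        by (simp only: Q00)
    qed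
    have da: "deriv f (Q x y) * f z0 = deriv f (Q x 0) * f (Q 0 y)" if x: "x \<in> S" and y: "y \<in> S" for x y
    proof -
      have P1: "Q x y \<notin> P" using QU[OF x y] U_iff by blast
      have P2: "Q x 0 \<notin> P" using QU[OF x S0] U_iff by blast
      have e1: "Q x y = z0 + of_real y * (\<i> * \<omega>) + of_real x * \<omega>" using Qa[of y x] by simp
      have e2: "Q x 0 = z0 + of_real 0 * (\<i> * \<omega>) + of_real x * \<omega>" using Qa[of 0 x] by simp
      have l1: "((\<lambda>t. f (z0 + of_real y * (\<i> * \<omega>) + of_real t * \<omega>)) has_vector_derivative \<omega> * deriv f (Q x y)) (at x)"
        using line_deriv[OF der[OF P1] e1] .
      have l2: "((\<lambda>t. f (z0 + of_real 0 * (\<i> * \<omega>) + of_real t * \<omega>)) has_vector_derivative \<omega> * deriv f (Q x 0)) (at x)"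
        using line_deriv[OF der[OF P2] e2] .
      have d1: "((\<lambda>t. f (z0 + of_real y * (\<i> * \<omega>) + of_real t * \<omega>) * f z0) has_vector_derivative
          \<omega> * deriv f (Q x y) * f z0) (at x)"
        using has_vector_derivative_mult_left[OF l1] .
      have d2: "((\<lambda>t. f (z0 + of_real 0 * (\<i> * \<omega>) + of_real t * \<omega>) * f (Q 0 y)) has_vector_derivative
          \<omega> * deriv f (Q x 0) * f (Q 0 y)) (at x)"
        using has_vector_derivative_mult_left[OF l2] .
      have ev: "eventually (\<lambda>t. f (z0 + of_real y * (\<i> * \<omega>) + of_real t * \<omega>) * f z0 =
          f (z0 + of_real 0 * (\<i> * \<omega>) + of_real t * \<omega>) * f (Q 0 y)) (nhds x)"
        using eventually_nhds_in_open[OF oS x]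
      proof (elim eventually_mono)
        fix t assume t: "t \<in> S"
        have q1: "z0 + of_real y * (\<i> * \<omega>) + of_real t * \<omega> = Q t y" using Qa[of y t] .
        have q2: "z0 + of_real 0 * (\<i> * \<omega>) + of_real t * \<omega> = Q t 0" using Qa[of 0 t] .
        show "f (z0 + of_real y * (\<i> * \<omega>) + of_real t * \<omega>) * f z0 =
          f (z0 + of_real 0 * (\<i> * \<omega>) + of_real t * \<omega>) * f (Q 0 y)"
          unfolding q1 q2 using pid[OF t y] .
      qed
      have "\<omega> * deriv f (Q x y) * f z0 = \<omega> * deriv f (Q x 0) * f (Q 0 y)"
        using deriv_eq_ev[OF d1 d2 ev] .
      then show ?thesis using assms(3) by (simp add: mult.assoc)
    qed
    have db: "deriv f (Q x 0) * f z0 = f (Q x 0) * deriv f z0" if x: "x \<in> S" for x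
    proof -
      have P2: "Q x 0 \<notin> P" using QU[OF x S0] U_iff by blast
      have P0: "Q 0 0 \<notin> P" using QU[OF S0 S0] U_iff by blast
      have e1: "Q x 0 = z0 + of_real x * \<omega> + of_real 0 * (\<i> * \<omega>)" using Qb[of x 0] by simp
      have e2: "Q 0 0 = z0 + of_real 0 * \<omega> + of_real 0 * (\<i> * \<omega>)" using Qb[of 0 0] by simp
      have l1: "((\<lambda>t. f (z0 + of_real x * \<omega> + of_real t * (\<i> * \<omega>))) has_vector_derivative (\<i> * \<omega>) * deriv f (Q x 0)) (at 0)"
        using line_deriv[OF der[OF P2] e1] .
      have l2: "((\<lambda>t. f (z0 + of_real 0 * \<omega> + of_real t * (\<i> * \<omega>))) has_vector_derivative (\<i> * \<omega>) * deriv f (Q 0 0)) (at 0)"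
        using line_deriv[OF der[OF P0] e2] .
      have d1: "((\<lambda>t. f (z0 + of_real x * \<omega> + of_real t * (\<i> * \<omega>)) * f z0) has_vector_derivative
          (\<i> * \<omega>) * deriv f (Q x 0) * f z0) (at 0)"
        using has_vector_derivative_mult_left[OF l1] .
      have d2: "((\<lambda>t. f (Q x 0) * f (z0 + of_real 0 * \<omega> + of_real t * (\<i> * \<omega>))) has_vector_derivative
          f (Q x 0) * ((\<i> * \<omega>) * deriv f (Q 0 0))) (at 0)"
        using has_vector_derivative_mult_right[OF l2] .
      have ev: "eventually (\<lambda>t. f (z0 + of_real x * \<omega> + of_real t * (\<i> * \<omega>)) * f z0 =
          f (Q x 0) * f (z0 + of_real 0 * \<omega> + of_real t * (\<i> * \<omega>))) (nhds 0)"
        using eventually_nhds_in_open[OF oS S0]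
      proof (elim eventually_mono)
        fix t assume t: "t \<in> S"
        have q1: "z0 + of_real x * \<omega> + of_real t * (\<i> * \<omega>) = Q x t" using Qb[of x t] .
        have q2: "z0 + of_real 0 * \<omega> + of_real t * (\<i> * \<omega>) = Q 0 t" using Qb[of 0 t] .
        show "f (z0 + of_real x * \<omega> + of_real t * (\<i> * \<omega>)) * f z0 =
          f (Q x 0) * f (z0 + of_real 0 * \<omega> + of_real t * (\<i> * \<omega>))"
          unfolding q1 q2 using pid[OF x t] .
      qed
      have "(\<i> * \<omega>) * deriv f (Q x 0) * f z0 = f (Q x 0) * ((\<i> * \<omega>) * deriv f (Q 0 0))"
        using deriv_eq_ev[OF d1 d2 ev] .
      then have "(\<i> * \<omega>) * (deriv f (Q x 0) * f z0) = (\<i> * \<omega>) * (f (Q x 0) * deriv f z0)"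
        using Q00 by (simp only: mult.assoc mult.left_commute)
      then show ?thesis using assms(3) by simp
    qed
    have fz0: "f z0 \<noteq> 0" using z0 U_iff by simp
    have dc: "deriv f (Q x y) * f z0 = deriv f z0 * f (Q x y)" if x: "x \<in> S" and y: "y \<in> S" for x y
    proof -
      have "deriv f (Q x y) * f z0 * f z0 = deriv f (Q x 0) * f z0 * f (Q 0 y)"
        using da[OF x y] by (simp add: algebra_simps)
      also have "\<dots> = deriv f z0 * (f (Q x 0) * f (Q 0 y))" using db[OF x] by (simp add: algebra_simps)
      also have "\<dots> = deriv f z0 * f (Q x y) * f z0" using pid[OF x y] by (simp add: algebra_simps)
      finally show ?thesis using fz0 by simp
    qed
    show ?thesis
    proof (intro exI[of _ "\<rho> * cmod \<omega>"] conjI ballI)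
      show "\<rho> * cmod \<omega> > 0" using rho w0 by simp
      fix w assume w: "w \<in> ball z0 (\<rho> * cmod \<omega>)"
      define s where "s = (w - z0) / \<omega>"
      have cs: "cmod s < \<rho>" using w w0 by (simp add: s_def dist_norm norm_divide norm_minus_commute divide_less_eq)
      have xs: "Re s \<in> S" "Im s \<in> S" using cs abs_Re_le_cmod[of s] abs_Im_le_cmod[of s] by (auto simp: S_def)
      have "Q (Re s) (Im s) = z0 + s * \<omega>" unfolding Q_def
        by (simp add: complex_eq_iff algebra_simps)
      also have "\<dots> = w" using assms(3) by (simp add: s_def)
      finally have Qw: "Q (Re s) (Im s) = w" .
      show "w \<in> U" using QU[OF xs] Qw by simp
      show "deriv f w * f z0 = deriv f z0 * f w" using dc[OF xs] Qw by simp
    qed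
  qed

  obtain z1 where z1: "z1 \<notin> P" "f z1 \<noteq> 0" using assms(2) by blast
  have z1U: "z1 \<in> U" using z1 U_iff by simp
  define a where "a = deriv f z1 / f z1"
  define K where "K = f z1 * exp (- (a * z1))"
  have K0: "K \<noteq> 0" using z1 by (simp add: K_def)
  define T where "T = {z. z \<in> U \<and> deriv f z = a * f z \<and> f z = K * exp (a * z)}"
  have z1T: "z1 \<in> T" using z1U z1 by (simp add: T_def a_def K_def exp_minus field_simps)
  have oT: "open T"
  proof (rule openI)
    fix z assume z: "z \<in> T"
    then have zU: "z \<in> U" and dz: "deriv f z = a * f z" and fz: "f z = K * exp (a * z)"
      by (auto simp: T_def)
    obtain e where e: "e > 0" "\<forall>w\<in>ball z e. w \<in> U \<and> deriv f w * f z = deriv f z * f w"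
      using local[OF zU] by blast
    have fz0: "f z \<noteq> 0" using zU U_iff by simp
    have dw: "deriv f w = a * f w" if w: "w \<in> ball z e" for w
    proof -
      have "deriv f w * f z = (a * f w) * f z" using e(2) w dz by (simp add: algebra_simps)
      then show ?thesis using fz0 by simp
    qed
    define H where "H = (\<lambda>w. f w * exp (- (a * w)))"
    have "(H has_field_derivative 0) (at w within ball z e)" if w: "w \<in> ball z e" for w
    proof -
      have wP: "w \<notin> P" using e(2) w U_iff by blast
      have E: "((\<lambda>w. exp (- (a * w))) has_field_derivative exp (- (a * w)) * (- a)) (at w within ball z e)"
        by (auto intro!: derivative_eq_intros)
      have "(H has_field_derivative f w * (exp (- (a * w)) * (- a)) + deriv f w * exp (- (a * w))) (at w within ball z e)"
        unfolding H_def by (rule DERIV_mult'[OF has_field_derivative_at_within[OF der[OF wP]] E])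
      then show ?thesis using dw[OF w] by (simp add: algebra_simps)
    qed
    then obtain c where c: "\<forall>w\<in>ball z e. H w = c"
      using has_field_derivative_zero_constant[of "ball z e" H] by auto
    have Hz: "H z = K" using fz by (simp add: H_def exp_minus field_simps)
    have "ball z e \<subseteq> T"
    proof
      fix w assume w: "w \<in> ball z e"
      have "H w = K" using c w e(1) Hz by (metis centre_in_ball)
      then have fw: "f w = K * exp (a * w)" by (simp add: H_def exp_minus field_simps)
      show "w \<in> T" using e(2) w dw[OF w] fw by (simp add: T_def)
    qed
    then show "\<exists>e>0. ball z e \<subseteq> T" using e(1) by blast
  qed
  have cT: "closedin (top_of_set (- P)) T"
    unfolding closedin_limpt
  proof (intro conjI allI impI)
    show "T \<subseteq> - P" by (auto simp: T_def U_iff)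
    fix x assume x: "x islimpt T \<and> x \<in> - P"
    have cf: "isCont f x"
      using holomorphic_on_imp_continuous_on[OF hol] oV x continuous_on_eq_continuous_at by blast
    have l1: "(f \<longlongrightarrow> f x) (at x within T)"
    proof -
      have "(f \<longlongrightarrow> f x) (at x)" using cf isCont_def by blast
      then show ?thesis by (rule tendsto_within_subset) simp
    qed
    have l0: "((\<lambda>w. K * exp (a * w)) \<longlongrightarrow> K * exp (a * x)) (at x within T)"
      by (auto intro!: tendsto_eq_intros)
    have l2: "(f \<longlongrightarrow> K * exp (a * x)) (at x within T)"
      by (rule Lim_transform_within[OF l0 zero_less_one]) (auto simp: T_def)
    have nb: "at x within T \<noteq> bot" using x by (simp add: trivial_limit_within)
    have fx: "f x = K * exp (a * x)" using tendsto_unique[OF nb l1 l2] .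
    then have xU: "x \<in> U" using x K0 U_iff by simp
    obtain e where e: "e > 0" "\<forall>w\<in>ball x e. w \<in> U \<and> deriv f w * f x = deriv f x * f w"
      using local[OF xU] by blast
    obtain w where w: "w \<in> T" "dist w x < e" using x e(1) islimpt_approachable by blast
    have "w \<in> ball x e" using w by (simp add: dist_commute)
    then have "deriv f w * f x = deriv f x * f w" using e by blast
    with w(1) have "(a * f x) * f w = deriv f x * f w" by (simp add: T_def algebra_simps)
    moreover have "f w \<noteq> 0" using w(1) K0 by (simp add: T_def U_iff)
    ultimately have "deriv f x = a * f x" by simp
    then show "x \<in> T" using xU fx by (simp add: T_def)
  qed
  have cntP: "countable P"
  proof -
    have "P \<subseteq> (\<Union>n::nat. cball 0 (real n) \<inter> P)"
    proof
      fix x assume "x \<in> P"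
      obtain n where "norm x \<le> real n" using real_arch_simple by blast
      then show "x \<in> (\<Union>n::nat. cball 0 (real n) \<inter> P)" using \<open>x \<in> P\<close> by auto
    qed
    then have "P = (\<Union>n::nat. cball 0 (real n) \<inter> P)" by blast
    moreover have "finite (cball 0 (real n) \<inter> P)" for n
      using finite_not_islimpt_in_compact[OF compact_cball] nlim by blast
    ultimately show ?thesis by (metis countable_UN countable_finite countableI_type)
  qed
  have conV: "connected (- P)"
    using connected_open_diff_countable[of UNIV P] cntP connected_UNIV by (simp add: Compl_eq_Diff_UNIV)
  have "openin (top_of_set (- P)) T" using open_subset[OF _ oT] by (auto simp: T_def U_iff)
  then have TV: "T = - P" using conV[unfolded connected_clopen] cT z1T by blast
  have Pe: "P = {}"
  proof (rule ccontr)
    assume "P \<noteq> {}" then obtain p where p: "p \<in> P" by blast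
    have ev: "eventually (\<lambda>w. w \<notin> P) (at p)" using nlim[of p] islimpt_iff_eventually by blast
    have ev2: "eventually (\<lambda>w. K * exp (a * w) = f w) (at p)"
      using ev
    proof (elim eventually_mono)
      fix w assume "w \<notin> P"
      then have "w \<in> T" using TV by simp
      then show "K * exp (a * w) = f w" by (simp add: T_def)
    qed
    have "((\<lambda>w. K * exp (a * w)) \<longlongrightarrow> K * exp (a * p)) (at p)" by (auto intro!: tendsto_eq_intros)
    then have "(f \<longlongrightarrow> K * exp (a * p)) (at p)" using Lim_transform_eventually ev2 by blast
    then show False using not_tendsto_and_filterlim_at_infinity[OF at_neq_bot _ pinf[OF p]] by blast
  qed
  have "f z = exp (a * z + Ln K)" for z
  proof -
    have "z \<in> T" using TV Pe by simp
    then have "f z = K * exp (a * z)" by (simp add: T_def)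
    then show ?thesis using K0 by (simp add: exp_add)
  qed
  then show ?thesis by blast
qed

end
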